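(* Let $h$ and $a$ be positive integers and let $k = a^2$. Then $\left((a-1)h+1\right)^2 \in \mathcal{R}_{\mathbf{Z}}(h,k)$.
   Context: For a positive integer $h$ and a finite set $A$ of integers, $hA$ denotes the set of all sums $a_1+\cdots+a_h$ with $a_1,\ldots,a_h \in A$ (not necessarily distinct). The sumset size set is $\mathcal{R}_{\mathbf{Z}}(h,k) = \{ |hA| : A \subseteq \mathbf{Z},\ |A| = k\}$. *)

theory Defs
  imports Main
begin

definition hsumset :: "nat \<Rightarrow> int set \<Rightarrow> int set" where
  "hsumset h A = {sum_list xs | xs. length xs = h \<and> set xs \<subseteq> A}"

definition sumset_sizes :: "nat \<Rightarrow> nat \<Rightarrow> nat set" where
  "sumset_sizes h k = {card (hsumset h A) | A. finite A \<and> card A = k}"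

end

theory Submission
  imports Defs
begin

lemma hsumset_0: "hsumset 0 A = {0}"
  unfolding hsumset_def by auto

lemma hsumset_Suc: "hsumset (Suc h) A = {x + s | x s. x \<in> A \<and> s \<in> hsumset h A}"
proof
  show "hsumset (Suc h) A \<subseteq> {x + s | x s. x \<in> A \<and> s \<in> hsumset h A}"
  proof
    fix t assume "t \<in> hsumset (Suc h) A"
    then obtain xs where xs: "length xs = Suc h" "set xs \<subseteq> A" "t = sum_list xs"
      unfolding hsumset_def by auto
    then obtain y ys where "xs = y # ys" by (cases xs) auto
    with xs show "t \<in> {x + s | x s. x \<in> A \<and> s \<in> hsumset h A}"
      unfolding hsumset_def by auto
  qed
next
  show "{x + s | x s. x \<in> A \<and> s \<in> hsumset h A} \<subseteq> hsumset (Suc h) A"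
  proof
    fix t assume "t \<in> {x + s | x s. x \<in> A \<and> s \<in> hsumset h A}"
    then obtain x ys where "x \<in> A" "length ys = h" "set ys \<subseteq> A" "t = x + sum_list ys"
      unfolding hsumset_def by auto
    then show "t \<in> hsumset (Suc h) A" unfolding hsumset_def
      by (auto intro!: exI[of _ "x # ys"])
  qed
qed

definition grid :: "int \<Rightarrow> int \<Rightarrow> int set" where
  "grid M N = (\<lambda>(x,y). x + M * y) ` ({0..N} \<times> {0..N})"

lemma hsumset_grid:
  assumes "n \<ge> 0"
  shows "hsumset h (grid M n) = grid M (n * int h)"
proof (induction h)
  case 0
  then show ?case by (auto simp: hsumset_0 grid_def)
next
  case (Suc h)
  have "hsumset (Suc h) (grid M n) = {x + s | x s. x \<in> grid M n \<and> s \<in> grid M (n * int h)}"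
    using Suc by (simp add: hsumset_Suc)
  also have "\<dots> = grid M (n * int (Suc h))"
  proof
    show "{x + s | x s. x \<in> grid M n \<and> s \<in> grid M (n * int h)} \<subseteq> grid M (n * int (Suc h))"
    proof
      fix t assume "t \<in> {x + s | x s. x \<in> grid M n \<and> s \<in> grid M (n * int h)}"
      then obtain x1 y1 x2 y2 where "0 \<le> x1" "x1 \<le> n" "0 \<le> y1" "y1 \<le> n"
        "0 \<le> x2" "x2 \<le> n * int h" "0 \<le> y2" "y2 \<le> n * int h"
        "t = (x1 + M * y1) + (x2 + M * y2)"
        unfolding grid_def by auto
      moreover have "t = (x1 + x2) + M * (y1 + y2)" using \<open>t = _\<close> by (simp add: algebra_simps)
      ultimately show "t \<in> grid M (n * int (Suc h))" unfolding grid_def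
        by (intro image_eqI[of _ _ "(x1+x2, y1+y2)"]) (auto simp: algebra_simps)
    qed
  next
    show "grid M (n * int (Suc h)) \<subseteq> {x + s | x s. x \<in> grid M n \<and> s \<in> grid M (n * int h)}"
    proof
      fix t assume "t \<in> grid M (n * int (Suc h))"
      then obtain x y where xy: "0 \<le> x" "x \<le> n * int (Suc h)" "0 \<le> y" "y \<le> n * int (Suc h)"
        "t = x + M * y" unfolding grid_def by auto
      define x1 where "x1 = min x n"
      define y1 where "y1 = min y n"
      have e: "n * int (Suc h) = n + n * int h" by (simp add: algebra_simps)
      have a1: "x1 + M * y1 \<in> grid M n" unfolding grid_def
        using xy assms by (intro image_eqI[of _ _ "(x1, y1)"]) (auto simp: x1_def y1_def min_def)
      have a2: "(x - x1) + M * (y - y1) \<in> grid M (n * int h)" unfolding grid_def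
        using xy assms e by (intro image_eqI[of _ _ "(x - x1, y - y1)"]) (auto simp: x1_def y1_def min_def)
      have "t = (x1 + M * y1) + ((x - x1) + M * (y - y1))" using xy by (simp add: algebra_simps)
      with a1 a2 show "t \<in> {x + s | x s. x \<in> grid M n \<and> s \<in> grid M (n * int h)}" by blast
    qed
  qed
  finally show ?case .
qed

lemma card_grid:
  assumes "0 \<le> N" "N < M"
  shows "card (grid M N) = nat (N + 1) ^ 2"
proof -
  have inj: "inj_on (\<lambda>(x,y). x + M * y) ({0..N} \<times> {0..N})"
  proof (rule inj_onI, clarify)
    fix x y x' y' :: int
    assume h: "x \<in> {0..N}" "y \<in> {0..N}" "x' \<in> {0..N}" "y' \<in> {0..N}" "x + M * y = x' + M * y'"
    have m1: "(x + M * y) mod M = x" using h assms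
      by (metis add.commute atLeastAtMost_iff mod_mult_self2 mod_pos_pos_trivial order_le_less_trans)
    have m2: "(x' + M * y') mod M = x'" using h assms
      by (metis add.commute atLeastAtMost_iff mod_mult_self2 mod_pos_pos_trivial order_le_less_trans)
    have "x = x'" using m1 m2 h(5) by simp
    moreover then have "M * y = M * y'" using h(5) by simp
    then have "y = y'" using assms by simp
    ultimately show "x = x' \<and> y = y'" by simp
  qed
  have "card (grid M N) = card ({0..N} \<times> {0..N})"
    unfolding grid_def using card_image[OF inj] by simp
  also have "\<dots> = nat (N + 1) ^ 2" by (simp add: card_cartesian_product power2_eq_square)
  finally show ?thesis .
qed

theorem mainTheorem5:
  fixes h a k :: nat
  assumes "h \<ge> 1" and "a \<ge> 1" and "k = a ^ 2"
  shows "((a - 1) * h + 1) ^ 2 \<in> sumset_sizes h k"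
proof -
  define n :: int where "n = int a - 1"
  define M :: int where "M = n * int h + 1"
  have n0: "n \<ge> 0" using assms n_def by simp
  have nM: "n < M" using assms n0 unfolding M_def
    by (smt (verit) mult_le_cancel_left1 of_nat_1 of_nat_mono)
  have c1: "card (grid M n) = k" using card_grid[OF n0 nM] assms n_def by simp
  have "card (hsumset h (grid M n)) = nat (n * int h + 1) ^ 2"
    using hsumset_grid[OF n0] card_grid[of "n * int h" M] n0 M_def by simp
  also have "\<dots> = ((a - 1) * h + 1) ^ 2" using assms n_def
    by (simp add: nat_add_distrib nat_mult_distrib of_nat_diff)
  finally have c2: "card (hsumset h (grid M n)) = ((a - 1) * h + 1) ^ 2" .
  have "finite (grid M n)" unfolding grid_def by simp
  then have "\<exists>A. ((a - 1) * h + 1) ^ 2 = card (hsumset h A) \<and> finite A \<and> card A = k"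
    using c1 c2 by metis
  then show ?thesis unfolding sumset_sizes_def by blast
qed

end
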